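(* Let $T$ be a finite tree with positive weights $x_v$ (vertices) and $w_e$ (edges), let $c_0,c_l$ be vertices at distance $l\geq1$ with simple path $c_0,c_1,\dots,c_l$, and root $T$ at $c_0$. Then $$Z_{T_{c_1}-T_{c_l}}\,Z_T\;\geq\;Z_{T_{c_1}}\,Z_{T-T_{c_l}}\ \text{ if $l$ is odd},\qquad Z_{T_{c_1}-T_{c_l}}\,Z_T\;\leq\;Z_{T_{c_1}}\,Z_{T-T_{c_l}}\ \text{ if $l$ is even}.$$ (For $l=0$ the paper's statement, with left-hand side multiplied by $\mathbb 1_{l\geq1}$, reduces to the trivial inequality $0\le$ right-hand side.)
   Context: General monomer-dimer model on a finite graph $G=(V,E)$: $Z_G=\sum_{D}\prod_{e\in D}w_e\prod_{v\in\mathscr M_G(D)}x_v$, the sum over all matchings $D\subseteq E$, where $\mathscr M_G(D)$ is the set of vertices not covered by $D$; the partition function of the empty graph is $1$. In the tree $T$ rooted at $c_0$, $T_v$ denotes the subtree induced by $v$ and all its descendants; for subtrees $A\supseteq B$, $A-B$ denotes the subgraph induced by the vertices of $A$ not in $B$. *)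

theory Defs
  imports Complex_Main
begin

definition simple_graph :: "'a set \<Rightarrow> 'a set set \<Rightarrow> bool" where
  "simple_graph V E \<longleftrightarrow> finite V \<and>
     (\<forall>e\<in>E. \<exists>a b. a \<noteq> b \<and> e = {a, b} \<and> a \<in> V \<and> b \<in> V)"

definition is_path :: "'a set \<Rightarrow> 'a set set \<Rightarrow> 'a list \<Rightarrow> 'a \<Rightarrow> 'a \<Rightarrow> bool" where
  "is_path V E p u v \<longleftrightarrow> p \<noteq> [] \<and> hd p = u \<and> last p = v \<and> distinct p \<and> set p \<subseteq> V \<and>
     (\<forall>i. Suc i < length p \<longrightarrow> {p ! i, p ! Suc i} \<in> E)"

definition is_tree :: "'a set \<Rightarrow> 'a set set \<Rightarrow> bool" where
  "is_tree V E \<longleftrightarrow> simple_graph V E \<and> V \<noteq> {} \<and>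
     (\<forall>u\<in>V. \<forall>v\<in>V. \<exists>!p. is_path V E p u v)"

definition subtree_verts :: "'a set \<Rightarrow> 'a set set \<Rightarrow> 'a \<Rightarrow> 'a \<Rightarrow> 'a set" where
  "subtree_verts V E r v = {u \<in> V. \<exists>p. is_path V E p r u \<and> v \<in> set p}"

definition matching :: "'a set set \<Rightarrow> bool" where
  "matching D \<longleftrightarrow> (\<forall>e\<in>D. \<forall>f\<in>D. e \<noteq> f \<longrightarrow> e \<inter> f = {})"

text \<open>Monomer-dimer partition function of the subgraph of (V,E) induced by S
(for S = {} this is 1).\<close>
definition Z :: "'a set set \<Rightarrow> ('a set \<Rightarrow> real) \<Rightarrow> ('a \<Rightarrow> real) \<Rightarrow> 'a set \<Rightarrow> real" where
  "Z E w x S = (\<Sum>D\<in>{D. D \<subseteq> {e\<in>E. e \<subseteq> S} \<and> matching D}.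
       (\<Prod>e\<in>D. w e) * (\<Prod>v\<in>S - \<Union>D. x v))"

end

theory Submission
  imports Defs
begin


definition MM :: "'a set set \<Rightarrow> 'a set \<Rightarrow> 'a set set set" where
  "MM E S = {D. D \<subseteq> {e\<in>E. e \<subseteq> S} \<and> matching D}"

lemma Z_MM: "Z E w x S = (\<Sum>D\<in>MM E S. (\<Prod>e\<in>D. w e) * (\<Prod>v\<in>S - \<Union>D. x v))"
  unfolding Z_def MM_def by simp

lemma finite_MM: "finite E \<Longrightarrow> finite (MM E S)"
  unfolding MM_def by (rule finite_subset[of _ "Pow E"]) auto

lemma Z_edges_cong:
  assumes "{e\<in>E. e \<subseteq> S} = {e\<in>E'. e \<subseteq> S}"
  shows "Z E w x S = Z E' w x S"
  unfolding Z_def using assms by simp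

lemma Z_delete:
  assumes fin: "finite E" and e0: "e0 \<in> E" "e0 \<subseteq> S" "e0 \<noteq> {}"
  shows "Z E w x S = Z (E - {e0}) w x S + w e0 * Z E w x (S - e0)"
proof -
  let ?f = "\<lambda>D. (\<Prod>e\<in>D. w e) * (\<Prod>v\<in>S - \<Union>D. x v)"
  have split: "MM E S = {D\<in>MM E S. e0 \<notin> D} \<union> {D\<in>MM E S. e0 \<in> D}" by auto
  have A: "{D\<in>MM E S. e0 \<notin> D} = MM (E - {e0}) S" unfolding MM_def by auto
  have B: "{D\<in>MM E S. e0 \<in> D} = insert e0 ` MM E (S - e0)"
  proof
    show "{D\<in>MM E S. e0 \<in> D} \<subseteq> insert e0 ` MM E (S - e0)"
    proof
      fix D assume D: "D \<in> {D\<in>MM E S. e0 \<in> D}"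
      have "D - {e0} \<in> MM E (S - e0)"
        using D unfolding MM_def matching_def by blast
      moreover have "D = insert e0 (D - {e0})" using D by auto
      ultimately show "D \<in> insert e0 ` MM E (S - e0)" by blast
    qed
  next
    show "insert e0 ` MM E (S - e0) \<subseteq> {D\<in>MM E S. e0 \<in> D}"
    proof -
      have "insert e0 D \<in> MM E S" if D: "D \<in> MM E (S - e0)" for D
      proof -
        have sub: "insert e0 D \<subseteq> {e\<in>E. e\<subseteq>S}" using D e0 unfolding MM_def by auto
        have "matching (insert e0 D)" unfolding matching_def
        proof (intro ballI impI)
          fix a b assume "a \<in> insert e0 D" "b \<in> insert e0 D" "a \<noteq> b"
          then show "a \<inter> b = {}" using D unfolding MM_def matching_def by blast
        qed
        then show ?thesis using sub unfolding MM_def by auto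
      qed
      then show ?thesis by blast
    qed
  qed
  have notin: "e0 \<notin> D" if D: "D \<in> MM E (S - e0)" for D
  proof
    assume "e0 \<in> D"
    moreover have "D \<subseteq> {e\<in>E. e \<subseteq> S - e0}" using D by (simp add: MM_def)
    ultimately have "e0 \<in> {e\<in>E. e \<subseteq> S - e0}" by (rule subsetD[rotated])
    then have "e0 \<subseteq> S - e0" by simp
    then show False using e0(3) by blast
  qed
  have inj: "inj_on (insert e0) (MM E (S - e0))"
  proof (rule inj_onI)
    fix D1 D2 assume "D1 \<in> MM E (S - e0)" "D2 \<in> MM E (S - e0)" "insert e0 D1 = insert e0 D2"
    moreover have "e0 \<notin> D1" "e0 \<notin> D2" using calculation notin by auto
    ultimately show "D1 = D2" by (metis insert_ident)
  qed
  have "Z E w x S = sum ?f {D\<in>MM E S. e0 \<notin> D} + sum ?f {D\<in>MM E S. e0 \<in> D}"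
  proof -
    have f: "finite (MM E S)" by (rule finite_MM[OF fin])
    show ?thesis unfolding Z_MM
      by (subst split, rule sum.union_disjoint) (use f in auto)
  qed
  also have "sum ?f {D\<in>MM E S. e0 \<notin> D} = Z (E - {e0}) w x S" unfolding A Z_MM ..
  also have "sum ?f {D\<in>MM E S. e0 \<in> D} = sum (?f \<circ> insert e0) (MM E (S - e0))"
    unfolding B by (rule sum.reindex[OF inj])
  also have "\<dots> = (\<Sum>D\<in>MM E (S - e0). w e0 * ((\<Prod>e\<in>D. w e) * (\<Prod>v\<in>(S - e0) - \<Union>D. x v)))"
  proof (rule sum.cong[OF refl])
    fix D assume D: "D \<in> MM E (S - e0)"
    have "finite D" using D fin unfolding MM_def by (auto intro: finite_subset)
    moreover have "e0 \<notin> D" using notin[OF D] .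
    moreover have "S - \<Union>(insert e0 D) = (S - e0) - \<Union>D" by auto
    ultimately show "(?f \<circ> insert e0) D = w e0 * ((\<Prod>e\<in>D. w e) * (\<Prod>v\<in>(S - e0) - \<Union>D. x v))"
      by simp
  qed
  also have "\<dots> = w e0 * Z E w x (S - e0)" unfolding Z_MM by (rule sum_distrib_left[symmetric])
  finally show ?thesis .
qed

lemma Z_nonneg:
  assumes "\<forall>e\<in>E. w e > 0" "\<forall>v\<in>V. x v > 0" "S \<subseteq> V"
  shows "Z E w x S \<ge> 0"
  unfolding Z_def using assms
  by (intro sum_nonneg mult_nonneg_nonneg prod_nonneg) (auto intro!: less_imp_le)




lemma MM_edge: "D \<in> MM E S \<Longrightarrow> e \<in> D \<Longrightarrow> e \<in> E \<and> e \<subseteq> S"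
  unfolding MM_def by blast

lemma Z_prod:
  assumes fin: "finite E" and ne: "\<forall>e\<in>E. e \<noteq> {}"
    and fS: "finite S1" "finite S2" and disj: "S1 \<inter> S2 = {}"
    and sep: "\<forall>e\<in>E. e \<subseteq> S1 \<union> S2 \<longrightarrow> e \<subseteq> S1 \<or> e \<subseteq> S2"
  shows "Z E w x (S1 \<union> S2) = Z E w x S1 * Z E w x S2"
proof -
  let ?f = "\<lambda>S D. (\<Prod>e\<in>D. w e) * (\<Prod>v\<in>S - \<Union>D. x v)"
  define g where "g = (\<lambda>p. fst p \<union> snd p :: 'a set set)"
  have side: "\<not> e \<subseteq> S1" if "e \<in> E" "e \<subseteq> S2" for e
    using that ne disj by blast
  have side2: "\<not> e \<subseteq> S2" if "e \<in> E" "e \<subseteq> S1" for e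
    using that ne disj by blast
  have dec1: "fst p = {e \<in> g p. e \<subseteq> S1}" if "p \<in> MM E S1 \<times> MM E S2" for p
  proof -
    have "\<forall>e\<in>snd p. \<not> e \<subseteq> S1" using that side MM_edge[of "snd p"] by (metis mem_Times_iff)
    moreover have "\<forall>e\<in>fst p. e \<subseteq> S1" using that MM_edge[of "fst p"] by (metis mem_Times_iff)
    ultimately show ?thesis unfolding g_def by blast
  qed
  have dec2: "snd p = {e \<in> g p. e \<subseteq> S2}" if "p \<in> MM E S1 \<times> MM E S2" for p
  proof -
    have "\<forall>e\<in>fst p. \<not> e \<subseteq> S2" using that side2 MM_edge[of "fst p"] by (metis mem_Times_iff)
    moreover have "\<forall>e\<in>snd p. e \<subseteq> S2" using that MM_edge[of "snd p"] by (metis mem_Times_iff)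
    ultimately show ?thesis unfolding g_def by blast
  qed
  have inj: "inj_on g (MM E S1 \<times> MM E S2)"
  proof (rule inj_onI)
    fix p q assume "p \<in> MM E S1 \<times> MM E S2" "q \<in> MM E S1 \<times> MM E S2" "g p = g q"
    then have "fst p = fst q" "snd p = snd q" using dec1 dec2 by metis+
    then show "p = q" by (rule prod_eqI)
  qed
  have img: "g ` (MM E S1 \<times> MM E S2) = MM E (S1 \<union> S2)"
  proof
    show "g ` (MM E S1 \<times> MM E S2) \<subseteq> MM E (S1 \<union> S2)"
    proof
      fix D assume "D \<in> g ` (MM E S1 \<times> MM E S2)"
      then obtain D1 D2 where h: "D1 \<in> MM E S1" "D2 \<in> MM E S2" "D = D1 \<union> D2"
        unfolding g_def by auto
      have "D \<subseteq> {e\<in>E. e \<subseteq> S1 \<union> S2}" using h MM_edge by blast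
      moreover have "matching D" unfolding matching_def
      proof (intro ballI impI)
        fix a b assume ab: "a \<in> D" "b \<in> D" "a \<noteq> b"
        show "a \<inter> b = {}"
        proof (cases "a \<in> D1")
          case True
          show ?thesis
          proof (cases "b \<in> D1")
            case True
            with \<open>a \<in> D1\<close> ab h(1) show ?thesis unfolding MM_def matching_def by blast
          next
            case False
            then have "b \<in> D2" using ab h by blast
            then show ?thesis using \<open>a \<in> D1\<close> MM_edge h disj by blast
          qed
        next
          case False
          then have a2: "a \<in> D2" using ab h by blast
          show ?thesis
          proof (cases "b \<in> D2")
            case True
            with a2 ab h(2) show ?thesis unfolding MM_def matching_def by blast
          next
            case False
            then have "b \<in> D1" using ab h by blast
            then show ?thesis using a2 MM_edge h disj by blast
          qed
        qed
      qed
      ultimately show "D \<in> MM E (S1 \<union> S2)" unfolding MM_def by blast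
    qed
  next
    show "MM E (S1 \<union> S2) \<subseteq> g ` (MM E S1 \<times> MM E S2)"
    proof
      fix D assume D: "D \<in> MM E (S1 \<union> S2)"
      have "D = g ({e\<in>D. e \<subseteq> S1}, {e\<in>D. e \<subseteq> S2})" using D sep MM_edge[OF D] unfolding g_def by auto
      moreover have "({e\<in>D. e \<subseteq> S1}, {e\<in>D. e \<subseteq> S2}) \<in> MM E S1 \<times> MM E S2"
        using D unfolding MM_def matching_def by auto
      ultimately show "D \<in> g ` (MM E S1 \<times> MM E S2)" by blast
    qed
  qed
  have "Z E w x S1 * Z E w x S2 = (\<Sum>D1\<in>MM E S1. \<Sum>D2\<in>MM E S2. ?f S1 D1 * ?f S2 D2)"
    unfolding Z_MM by (rule sum_product)
  also have "\<dots> = (\<Sum>p\<in>MM E S1 \<times> MM E S2. ?f S1 (fst p) * ?f S2 (snd p))"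
    by (subst sum.cartesian_product) (simp add: case_prod_beta)
  also have "\<dots> = (\<Sum>p\<in>MM E S1 \<times> MM E S2. ?f (S1 \<union> S2) (g p))"
  proof (rule sum.cong[OF refl])
    fix p assume hp: "p \<in> MM E S1 \<times> MM E S2"
    define D1 where "D1 = fst p"
    define D2 where "D2 = snd p"
    have h: "D1 \<in> MM E S1" "D2 \<in> MM E S2" using hp unfolding D1_def D2_def by auto
    have fD: "finite D1" "finite D2" using h fin unfolding MM_def by (auto intro: finite_subset)
    have dd: "D1 \<inter> D2 = {}" using h side MM_edge by blast
    have u1: "\<Union>D1 \<subseteq> S1" "\<Union>D2 \<subseteq> S2" using h MM_edge by blast+
    have eq: "(S1 \<union> S2) - \<Union>(D1 \<union> D2) = (S1 - \<Union>D1) \<union> (S2 - \<Union>D2)" using u1 disj by blast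
    have "(\<Prod>e\<in>D1 \<union> D2. w e) = (\<Prod>e\<in>D1. w e) * (\<Prod>e\<in>D2. w e)"
      by (rule prod.union_disjoint[OF fD dd])
    moreover have "(\<Prod>v\<in>(S1 \<union> S2) - \<Union>(D1 \<union> D2). x v) = (\<Prod>v\<in>S1 - \<Union>D1. x v) * (\<Prod>v\<in>S2 - \<Union>D2. x v)"
      unfolding eq by (rule prod.union_disjoint) (use fS disj in auto)
    ultimately show "?f S1 (fst p) * ?f S2 (snd p) = ?f (S1 \<union> S2) (g p)"
      unfolding g_def D1_def[symmetric] D2_def[symmetric] by (simp add: ac_simps)
  qed
  also have "\<dots> = sum (?f (S1 \<union> S2)) (g ` (MM E S1 \<times> MM E S2))"
    by (rule sum.reindex[OF inj, symmetric, unfolded comp_def])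
  also have "\<dots> = Z E w x (S1 \<union> S2)" unfolding img Z_MM ..
  finally show ?thesis ..
qed




lemma cassini:
  fixes G :: "nat \<Rightarrow> nat \<Rightarrow> real" and a c :: "nat \<Rightarrow> real"
  assumes G0: "\<And>j. G j j = 1" and G1: "\<And>j. G j (Suc j) = a j"
    and rec: "\<And>j m. j \<le> m \<Longrightarrow> Suc m \<le> L \<Longrightarrow>
                G j (Suc (Suc m)) = a (Suc m) * G j (Suc m) + c (Suc m) * G j m"
    and cpos: "\<And>k. 1 \<le> k \<Longrightarrow> k \<le> L \<Longrightarrow> c k \<ge> 0"
    and l: "1 \<le> l" "l \<le> L"
  shows "(odd l \<longrightarrow> G 0 (Suc l) * G 1 l \<ge> G 0 l * G 1 (Suc l)) \<and>
    (even l \<longrightarrow> G 0 (Suc l) * G 1 l \<le> G 0 l * G 1 (Suc l))"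
proof -
  define F where "F l = G 0 (Suc l) * G 1 l - G 0 l * G 1 (Suc l)" for l
  have F1: "F 1 = c 1" if "1 \<le> L"
    using rec[of 0 0] that G0 G1 unfolding F_def by (simp add: algebra_simps)
  have FS: "F (Suc n) = - c (Suc n) * F n" if "1 \<le> n" "Suc n \<le> L" for n
    using rec[of 0 n] rec[of 1 n] that unfolding F_def by (simp add: algebra_simps)
  have "1 \<le> n \<longrightarrow> n \<le> L \<longrightarrow> (odd n \<longrightarrow> F n \<ge> 0) \<and> (even n \<longrightarrow> F n \<le> 0)" for n
  proof (induction n)
    case 0
    then show ?case by simp
  next
    case (Suc n)
    show ?case
    proof (intro impI)
      assume h: "1 \<le> Suc n" "Suc n \<le> L"
      show "(odd (Suc n) \<longrightarrow> F (Suc n) \<ge> 0) \<and> (even (Suc n) \<longrightarrow> F (Suc n) \<le> 0)"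
      proof (cases "n = 0")
        case True
        then show ?thesis using F1 cpos[of 1] h by simp
      next
        case False
        then have n1: "1 \<le> n" by simp
        have IH: "(odd n \<longrightarrow> F n \<ge> 0) \<and> (even n \<longrightarrow> F n \<le> 0)" using Suc.IH n1 h by simp
        have c: "c (Suc n) \<ge> 0" using cpos h by simp
        show ?thesis unfolding FS[OF n1 h(2)]
          using IH c by (auto simp: mult_nonneg_nonpos mult_nonpos_nonpos mult_nonneg_nonneg)
      qed
    qed
  qed
  then show ?thesis using l unfolding F_def by auto
qed



lemma path_take:
  assumes "is_path V E q a b" "i < length q"
  shows "is_path V E (take (Suc i) q) a (q ! i)"
proof -
  have "q \<noteq> []" using assms by (simp add: is_path_def)
  then have "hd (take (Suc i) q) = hd q" by (cases q) auto
  moreover have "last (take (Suc i) q) = q ! i"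
    using assms(2) by (simp add: take_Suc_conv_app_nth)
  moreover have "set (take (Suc i) q) \<subseteq> set q" by (rule set_take_subset)
  ultimately show ?thesis using assms unfolding is_path_def
    by (auto simp: nth_take)
qed

lemma path_snoc:
  assumes "is_path V E q a b" "{b, v} \<in> E" "v \<notin> set q" "v \<in> V"
  shows "is_path V E (q @ [v]) a v"
proof -
  have q: "q \<noteq> []" "hd q = a" "last q = b" "distinct q" "set q \<subseteq> V"
    "\<And>i. Suc i < length q \<Longrightarrow> {q ! i, q ! Suc i} \<in> E"
    using assms(1) unfolding is_path_def by auto
  have "{(q @ [v]) ! i, (q @ [v]) ! Suc i} \<in> E" if "Suc i < length (q @ [v])" for i
  proof (cases "Suc i < length q")
    case True
    then show ?thesis using q(6)[OF True] by (simp add: nth_append)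
  next
    case False
    then have "Suc i = length q" using that by simp
    then have ii: "i = length q - 1" by simp
    have "(q @ [v]) ! i = b" using q(1,3) ii by (simp add: nth_append last_conv_nth)
    moreover have "(q @ [v]) ! Suc i = v" using \<open>Suc i = length q\<close> by (simp add: nth_append)
    ultimately have "(q @ [v]) ! i = b" "(q @ [v]) ! Suc i = v" by auto
    then show ?thesis using assms(2) by simp
  qed
  then show ?thesis using q assms(3,4) unfolding is_path_def by auto
qed

lemma tree_finite_E:
  assumes "is_tree V E" shows "finite E"
proof -
  have "finite V" "\<forall>e\<in>E. \<exists>a b. a \<noteq> b \<and> e = {a, b} \<and> a \<in> V \<and> b \<in> V"
    using assms unfolding is_tree_def simple_graph_def by auto
  then show ?thesis by (intro finite_subset[of E "Pow V"]) auto
qed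

locale ptree =
  fixes V :: "'a set" and E :: "'a set set" and p :: "'a list" and l :: nat
  assumes tree: "is_tree V E"
    and path: "is_path V E p (p ! 0) (p ! l)"
    and len: "length p = l + 1"
begin

abbreviation "r \<equiv> p ! 0"

definition pi :: "'a \<Rightarrow> 'a list" where
  "pi u = (THE q. is_path V E q r u)"

lemma edgeE: "e \<in> E \<Longrightarrow> \<exists>a b. a \<noteq> b \<and> e = {a, b} \<and> a \<in> V \<and> b \<in> V"
  using tree unfolding is_tree_def simple_graph_def by auto

lemma finV: "finite V" using tree unfolding is_tree_def simple_graph_def by auto

lemma setp: "set p \<subseteq> V" using path unfolding is_path_def by auto
lemma distp: "distinct p" using path unfolding is_path_def by auto
lemma rV: "r \<in> V" using setp len nth_mem[of 0 p] by auto

lemma pV: "k \<le> l \<Longrightarrow> p ! k \<in> V" using setp len nth_mem[of k p] by auto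

lemma pi_path: "u \<in> V \<Longrightarrow> is_path V E (pi u) r u"
  unfolding pi_def using tree rV unfolding is_tree_def by (metis theI')

lemma pi_uniq: "u \<in> V \<Longrightarrow> is_path V E q r u \<Longrightarrow> pi u = q"
  using pi_path tree rV unfolding is_tree_def by metis

lemma pi_c: "k \<le> l \<Longrightarrow> pi (p ! k) = take (Suc k) p"
  using pi_uniq[OF pV path_take[OF path, of k]] len by simp

lemma r_in_pi: "u \<in> V \<Longrightarrow> r \<in> set (pi u)"
  using pi_path[of u] unfolding is_path_def by (metis hd_in_set)

lemma pi_ne: "u \<in> V \<Longrightarrow> pi u \<noteq> []" "u \<in> V \<Longrightarrow> last (pi u) = u" "u \<in> V \<Longrightarrow> distinct (pi u)"
  "u \<in> V \<Longrightarrow> set (pi u) \<subseteq> V"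
  using pi_path[of u] unfolding is_path_def by auto

lemma edge_pi:
  assumes "{u, v} \<in> E" "u \<noteq> v" "u \<in> V" "v \<in> V"
  shows "pi v = pi u @ [v] \<or> pi u = pi v @ [u]"
proof (cases "v \<in> set (pi u)")
  case False
  then have "pi v = pi u @ [v]"
    using pi_uniq[OF assms(4) path_snoc[OF pi_path[OF assms(3)] _ False assms(4)]] pi_ne assms
    by simp
  then show ?thesis ..
next
  case True
  then obtain i where i: "i < length (pi u)" "pi u ! i = v" by (metis in_set_conv_nth)
  have pv: "pi v = take (Suc i) (pi u)"
  proof -
    have "is_path V E (take (Suc i) (pi u)) r (pi u ! i)" by (rule path_take[OF pi_path[OF assms(3)] i(1)])
    then have "is_path V E (take (Suc i) (pi u)) r v" using i(2) by simp
    then show ?thesis using pi_uniq[OF assms(4)] by simp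
  qed
  have lastu: "pi u ! (length (pi u) - 1) = u" using pi_ne[OF assms(3)] by (simp add: last_conv_nth)
  have "i \<noteq> length (pi u) - 1" using lastu i assms(2) by auto
  then have ilt: "Suc i < length (pi u)" using i by simp
  have "u \<notin> set (pi v)"
  proof
    assume "u \<in> set (pi v)"
    then obtain k where k: "k < Suc i" "pi u ! k = u" using pv ilt by (auto simp: in_set_conv_nth)
    have a: "k < length (pi u)" "length (pi u) - 1 < length (pi u)" using k ilt by simp_all
    have "pi u ! k = pi u ! (length (pi u) - 1)" using k(2) lastu by simp
    then have "k = length (pi u) - 1"
      using nth_eq_iff_index_eq[OF pi_ne(3)[OF assms(3)] a] by simp
    then show False using k ilt by simp
  qed
  moreover have "{v, u} \<in> E" using assms(1) by (simp add: insert_commute)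
  ultimately have "pi u = pi v @ [u]"
    using pi_uniq[OF assms(3) path_snoc[OF pi_path[OF assms(4)] _ _ assms(3)]] pi_ne assms
    by simp
  then show ?thesis ..
qed

definition idx :: "'a \<Rightarrow> nat" where
  "idx u = Max {i. i \<le> l \<and> p ! i \<in> set (pi u)}"

lemma nested:
  assumes "u \<in> V" "i \<le> j" "j \<le> l" "p ! j \<in> set (pi u)"
  shows "p ! i \<in> set (pi u)"
proof -
  obtain k where k: "k < length (pi u)" "pi u ! k = p ! j" using assms(4) by (metis in_set_conv_nth)
  have "take (Suc k) (pi u) = pi (p ! j)"
  proof -
    have "is_path V E (take (Suc k) (pi u)) r (pi u ! k)" by (rule path_take[OF pi_path[OF assms(1)] k(1)])
    then have "is_path V E (take (Suc k) (pi u)) r (p ! j)" using k(2) by simp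
    then show ?thesis using pi_uniq[OF pV[OF assms(3)]] by simp
  qed
  also have "\<dots> = take (Suc j) p" using pi_c assms by simp
  finally have "set (take (Suc j) p) \<subseteq> set (pi u)" by (metis set_take_subset)
  moreover have "p ! i \<in> set (take (Suc j) p)" using assms len
    by (auto simp: in_set_conv_nth intro!: exI[of _ i])
  ultimately show ?thesis by blast
qed

lemma idx_set:
  assumes "u \<in> V"
  shows "idx u \<le> l" "p ! idx u \<in> set (pi u)"
proof -
  let ?A = "{i. i \<le> l \<and> p ! i \<in> set (pi u)}"
  have "finite ?A" by simp
  moreover have "0 \<in> ?A" using r_in_pi[OF assms] by simp
  ultimately have "idx u \<in> ?A" unfolding idx_def by (intro Max_in) auto
  then show "idx u \<le> l" "p ! idx u \<in> set (pi u)" by auto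
qed

lemma mem_iff:
  assumes "u \<in> V" "i \<le> l"
  shows "p ! i \<in> set (pi u) \<longleftrightarrow> i \<le> idx u"
proof
  assume "p ! i \<in> set (pi u)"
  then show "i \<le> idx u" unfolding idx_def using assms by (intro Max_ge) auto
next
  assume "i \<le> idx u"
  then show "p ! i \<in> set (pi u)" using nested[OF assms(1) _ idx_set[OF assms(1)]] by blast
qed

lemma subtree_eq:
  assumes "i \<le> l"
  shows "subtree_verts V E r (p ! i) = {u \<in> V. i \<le> idx u}"
  unfolding subtree_verts_def using pi_uniq pi_path mem_iff assms by blast

lemma idx_c:
  assumes "k \<le> l" shows "idx (p ! k) = k"
proof -
  have u: "p ! k \<in> V" using pV assms .
  have "k \<le> idx (p ! k)" using mem_iff[OF u assms] pi_c[OF assms] len assms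
    by (auto simp: in_set_conv_nth intro!: exI[of _ k])
  moreover have "idx (p ! k) \<le> k"
  proof -
    have "p ! idx (p ! k) \<in> set (take (Suc k) p)" using idx_set[OF u] pi_c[OF assms] by simp
    then obtain i where i: "i < Suc k" "take (Suc k) p ! i = p ! idx (p ! k)"
      using len assms by (auto simp: in_set_conv_nth)
    then have "p ! i = p ! idx (p ! k)" by simp
    then have "i = idx (p ! k)" using distp idx_set[OF u] len i assms
      by (simp add: nth_eq_iff_index_eq)
    then show ?thesis using i by simp
  qed
  ultimately show ?thesis by simp
qed

lemma idx_eq_of:
  assumes "u \<in> V" "v \<in> V" "\<And>i. i \<le> l \<Longrightarrow> p ! i \<in> set (pi u) \<longleftrightarrow> p ! i \<in> set (pi v)"
  shows "idx u = idx v"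
  unfolding idx_def using assms(3) by (metis (no_types, lifting))

lemma edge_idx_dir:
  assumes "{u, v} \<in> E" "u \<in> V" "v \<in> V" "pi v = pi u @ [v]"
  shows "idx u = idx v \<or> (\<exists>k. 1 \<le> k \<and> k \<le> l \<and> u = p ! (k - 1) \<and> v = p ! k)"
proof (cases "\<exists>k\<le>l. v = p ! k")
  case False
  then have "idx u = idx v" using assms by (intro idx_eq_of) auto
  then show ?thesis ..
next
  case True
  then obtain k where k: "k \<le> l" "v = p ! k" by blast
  have "r \<in> set (pi u)" using r_in_pi[OF assms(2)] .
  moreover have "v \<notin> set (pi u)" using pi_ne(3)[OF assms(3)] assms(4) by simp
  ultimately have "v \<noteq> r" by auto
  have k1: "k \<noteq> 0"
  proof
    assume "k = 0"
    then have "v = r" using k(2) by simp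
    then show False using \<open>v \<noteq> r\<close> by contradiction
  qed
  have "take (Suc k) p = pi u @ [v]" using pi_c[OF k(1)] k assms(4) by simp
  then have "butlast (take (Suc k) p) = pi u" by simp
  moreover have "butlast (take (Suc k) p) = take k p" using len k by (simp add: butlast_take)
  ultimately have "pi u = take k p" by simp
  then have "u = last (take k p)" using pi_ne(2)[OF assms(2)] by simp
  also have "\<dots> = p ! (k - 1)"
  proof -
    obtain k' where kk: "k = Suc k'" using k1 by (cases k) auto
    then show ?thesis using k len by (simp add: take_Suc_conv_app_nth)
  qed
  finally show ?thesis using k k1 by (intro disjI2 exI[of _ k]) auto
qed

lemma edge_idx:
  assumes "{u, v} \<in> E" "u \<noteq> v" "u \<in> V" "v \<in> V"
  shows "idx u = idx v \<or> (\<exists>k. 1 \<le> k \<and> k \<le> l \<and> {u, v} = {p ! (k - 1), p ! k})"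
proof -
  from edge_pi[OF assms] show ?thesis
  proof
    assume "pi v = pi u @ [v]"
    from edge_idx_dir[OF assms(1,3,4) this] show ?thesis by auto
  next
    assume "pi u = pi v @ [u]"
    from edge_idx_dir[OF _ assms(4,3) this] assms(1) show ?thesis
      by (auto simp: insert_commute)
  qed
qed

end



lemma Z_empty: "\<forall>e\<in>E. e \<noteq> {} \<Longrightarrow> Z E w x {} = 1"
proof -
  assume ne: "\<forall>e\<in>E. e \<noteq> {}"
  have "{D. D \<subseteq> {e\<in>E. e \<subseteq> {}} \<and> matching D} = {{}}"
    using ne by (auto simp: matching_def)
  then show ?thesis unfolding Z_def by simp
qed

context ptree
begin

lemma neE: "\<forall>e\<in>E. e \<noteq> {}"
proof
  fix e assume "e \<in> E"
  then obtain a b where "e = {a, b}" using edgeE by blast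
  then show "e \<noteq> {}" by simp
qed

lemma path_edge: "1 \<le> k \<Longrightarrow> k \<le> l \<Longrightarrow> {p ! (k - 1), p ! k} \<in> E"
proof -
  assume k: "1 \<le> k" "k \<le> l"
  have "\<forall>i. Suc i < length p \<longrightarrow> {p ! i, p ! Suc i} \<in> E" using path unfolding is_path_def by blast
  moreover have "Suc (k - 1) < length p" "Suc (k - 1) = k" using k len by auto
  ultimately show ?thesis by metis
qed

lemma idx_lt: "u \<in> V \<Longrightarrow> idx u \<le> l" using idx_set by blast

lemma crossing:
  assumes A: "A \<subseteq> {u\<in>V. idx u < k}" and B: "B \<subseteq> {u\<in>V. idx u = k}"
    and e: "e \<in> E" "e \<subseteq> A \<union> B" "\<not> e \<subseteq> A" "\<not> e \<subseteq> B"
  shows "1 \<le> k \<and> k \<le> l \<and> e = {p ! (k - 1), p ! k} \<and> p ! (k - 1) \<in> A \<and> p ! k \<in> B"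
proof -
  obtain a b where ab: "a \<noteq> b" "e = {a, b}" "a \<in> V" "b \<in> V" using edgeE[OF e(1)] by blast
  have "\<exists>a' b'. e = {a', b'} \<and> a' \<in> A \<and> b' \<in> B" using e ab by auto
  then obtain a' b' where ab': "e = {a', b'}" "a' \<in> A" "b' \<in> B" by blast
  have ia: "idx a' < k" "a' \<in> V" using A ab'(2) by auto
  have ib: "idx b' = k" "b' \<in> V" using B ab'(3) by auto
  have ne: "a' \<noteq> b'" using ia ib by auto
  from edge_idx[OF _ ne ia(2) ib(2)] ab'(1) e(1) ia ib
  obtain kk where kk: "1 \<le> kk" "kk \<le> l" "{a', b'} = {p ! (kk - 1), p ! kk}" by auto
  have i1: "idx (p ! (kk - 1)) = kk - 1" "idx (p ! kk) = kk" using idx_c kk by auto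
  have "a' = p ! (kk - 1) \<and> b' = p ! kk \<or> a' = p ! kk \<and> b' = p ! (kk - 1)"
    using kk(3) ne by (auto simp: doubleton_eq_iff)
  then have "a' = p ! (kk - 1) \<and> b' = p ! kk" using i1 ia ib kk(1) by auto
  then show ?thesis using i1 ib kk ab' by auto
qed

lemma Z_sep:
  assumes A: "A \<subseteq> {u\<in>V. idx u < k}" and B: "B \<subseteq> {u\<in>V. idx u = k}"
    and nb: "p ! (k - 1) \<notin> A \<or> p ! k \<notin> B"
  shows "Z E w x (A \<union> B) = Z E w x A * Z E w x B"
proof (rule Z_prod[OF tree_finite_E[OF tree] neE])
  show "finite A" "finite B" using A B finV by (auto intro: finite_subset)
  show "A \<inter> B = {}" using A B by auto
  show "\<forall>e\<in>E. e \<subseteq> A \<union> B \<longrightarrow> e \<subseteq> A \<or> e \<subseteq> B"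
    using crossing[OF A B] nb by blast
qed

lemma Z_join:
  assumes k: "1 \<le> k" "k \<le> l"
    and A: "A \<subseteq> {u\<in>V. idx u < k}" and B: "B \<subseteq> {u\<in>V. idx u = k}"
    and inA: "p ! (k - 1) \<in> A" and inB: "p ! k \<in> B"
  shows "Z E w x (A \<union> B) = Z E w x A * Z E w x B
           + w {p ! (k - 1), p ! k} * (Z E w x (A - {p ! (k - 1)}) * Z E w x (B - {p ! k}))"
proof -
  define e0 where "e0 = {p ! (k - 1), p ! k}"
  have e0E: "e0 \<in> E" unfolding e0_def using path_edge k .
  have fin: "finite E" by (rule tree_finite_E[OF tree])
  have nA: "p ! k \<notin> A" using A idx_c k by auto
  have "idx (p ! (k - 1)) = k - 1" using idx_c k by simp
  then have nB: "p ! (k - 1) \<notin> B" using B k by auto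
  have "Z E w x (A \<union> B) = Z (E - {e0}) w x (A \<union> B) + w e0 * Z E w x ((A \<union> B) - e0)"
    by (rule Z_delete[OF fin e0E]) (use inA inB e0_def in auto)
  also have "Z (E - {e0}) w x (A \<union> B) = Z (E - {e0}) w x A * Z (E - {e0}) w x B"
  proof (rule Z_prod)
    show "finite (E - {e0})" using fin by simp
    show "\<forall>e\<in>E - {e0}. e \<noteq> {}" using neE by blast
    show "finite A" "finite B" using A B finV by (auto intro: finite_subset)
    show "A \<inter> B = {}" using A B by auto
    show "\<forall>e\<in>E - {e0}. e \<subseteq> A \<union> B \<longrightarrow> e \<subseteq> A \<or> e \<subseteq> B"
      using crossing[OF A B] e0_def by blast
  qed
  also have "Z (E - {e0}) w x A = Z E w x A"
    by (rule Z_edges_cong) (use nA e0_def in auto)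
  also have "Z (E - {e0}) w x B = Z E w x B"
    by (rule Z_edges_cong) (use nB e0_def in auto)
  also have "(A \<union> B) - e0 = (A - {p ! (k - 1)}) \<union> (B - {p ! k})"
    using nA nB e0_def by auto
  also have "Z E w x \<dots> = Z E w x (A - {p ! (k - 1)}) * Z E w x (B - {p ! k})"
    by (rule Z_sep) (use A B in auto)
  finally show ?thesis unfolding e0_def .
qed

definition DD :: "nat \<Rightarrow> 'a set" where "DD k = {u\<in>V. idx u = k}"
definition UU :: "nat \<Rightarrow> nat \<Rightarrow> 'a set" where "UU j m = {u\<in>V. j \<le> idx u \<and> idx u < m}"

lemma rec_step:
  assumes "j \<le> m" "Suc m \<le> l"
  shows "Z E w x (UU j (Suc (Suc m))) = Z E w x (DD (Suc m)) * Z E w x (UU j (Suc m))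
     + (w {p ! m, p ! Suc m} * Z E w x (DD m - {p ! m}) * Z E w x (DD (Suc m) - {p ! Suc m}))
       * Z E w x (UU j m)"
proof -
  have im: "idx (p ! m) = m" "idx (p ! Suc m) = Suc m" using idx_c assms by auto
  have pm: "p ! m \<in> V" "p ! Suc m \<in> V" using pV assms by auto
  have "UU j (Suc (Suc m)) = UU j (Suc m) \<union> DD (Suc m)" unfolding UU_def DD_def using assms by auto
  then have "Z E w x (UU j (Suc (Suc m))) = Z E w x (UU j (Suc m)) * Z E w x (DD (Suc m))
     + w {p ! m, p ! Suc m} * (Z E w x (UU j (Suc m) - {p ! m}) * Z E w x (DD (Suc m) - {p ! Suc m}))"
    using Z_join[of "Suc m" "UU j (Suc m)" "DD (Suc m)"] assms im pm unfolding UU_def DD_def by auto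
  also have "UU j (Suc m) - {p ! m} = UU j m \<union> (DD m - {p ! m})" unfolding UU_def DD_def using assms im by auto
  also have "Z E w x \<dots> = Z E w x (UU j m) * Z E w x (DD m - {p ! m})"
    by (rule Z_sep[of _ m]) (auto simp: UU_def DD_def)
  finally show ?thesis by (simp add: algebra_simps)
qed

end

theorem lemma5p2:
  fixes V :: "'a set" and E :: "'a set set"
    and w :: "'a set \<Rightarrow> real" and x :: "'a \<Rightarrow> real"
    and p :: "'a list" and l :: nat
  assumes tree: "is_tree V E"
    and wpos: "\<forall>e\<in>E. w e > 0"
    and xpos: "\<forall>v\<in>V. x v > 0"
    and path: "is_path V E p (p ! 0) (p ! l)"
    and len: "length p = l + 1"
    and l1: "l \<ge> 1"
  shows "(odd l \<longrightarrow>
            Z E w x (subtree_verts V E (p!0) (p!1) - subtree_verts V E (p!0) (p!l)) * Z E w x V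
            \<ge> Z E w x (subtree_verts V E (p!0) (p!1)) * Z E w x (V - subtree_verts V E (p!0) (p!l)))
       \<and> (even l \<longrightarrow>
            Z E w x (subtree_verts V E (p!0) (p!1) - subtree_verts V E (p!0) (p!l)) * Z E w x V
            \<le> Z E w x (subtree_verts V E (p!0) (p!1)) * Z E w x (V - subtree_verts V E (p!0) (p!l)))"
proof -
  interpret ptree V E p l using tree path len by unfold_locales
  define G where "G j m = Z E w x (UU j m)" for j m
  define a where "a k = Z E w x (DD k)" for k
  define c where "c k = w {p ! (k - 1), p ! k} * Z E w x (DD (k - 1) - {p ! (k - 1)})
                     * Z E w x (DD k - {p ! k})" for k
  have G0: "G j j = 1" for j
  proof -
    have "UU j j = {}" unfolding UU_def by auto
    then show ?thesis unfolding G_def using Z_empty[OF neE] by simp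
  qed
  have G1: "G j (Suc j) = a j" for j
  proof -
    have "UU j (Suc j) = DD j" unfolding UU_def DD_def by auto
    then show ?thesis unfolding G_def a_def by simp
  qed
  have rec: "G j (Suc (Suc m)) = a (Suc m) * G j (Suc m) + c (Suc m) * G j m"
    if "j \<le> m" "Suc m \<le> l" for j m
    unfolding G_def a_def c_def using rec_step[OF that] by simp
  have cpos: "c k \<ge> 0" if "1 \<le> k" "k \<le> l" for k
  proof -
    have "w {p ! (k - 1), p ! k} > 0" using wpos path_edge that by blast
    moreover have "Z E w x (DD (k - 1) - {p ! (k - 1)}) \<ge> 0" "Z E w x (DD k - {p ! k}) \<ge> 0"
      by (rule Z_nonneg[OF wpos xpos], auto simp: DD_def)+
    ultimately show ?thesis unfolding c_def by simp
  qed
  have C: "(odd l \<longrightarrow> G 0 (Suc l) * G 1 l \<ge> G 0 l * G 1 (Suc l)) \<and>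
    (even l \<longrightarrow> G 0 (Suc l) * G 1 l \<le> G 0 l * G 1 (Suc l))"
    by (rule cassini[of G a l c l, OF G0 G1 rec cpos l1 order_refl]) auto
  have s1: "subtree_verts V E r (p ! 1) = UU 1 (Suc l)"
    unfolding subtree_eq[OF l1] UU_def using idx_lt by (force simp: less_Suc_eq_le)
  have sl: "subtree_verts V E r (p ! l) = {u\<in>V. l \<le> idx u}" using subtree_eq by simp
  have e1: "UU 1 (Suc l) - {u\<in>V. l \<le> idx u} = UU 1 l" unfolding UU_def by auto
  have e2: "V = UU 0 (Suc l)" unfolding UU_def using idx_lt by (force simp: less_Suc_eq_le)
  have e3: "V - {u\<in>V. l \<le> idx u} = UU 0 l" unfolding UU_def by auto
  show ?thesis unfolding s1 sl e1 e3 using C unfolding G_def e2[symmetric]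
    by (simp add: mult.commute)
qed


end
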